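(* Under Conditions 1 and 2, there exist constants $C>0$ and $n_0\ge1$ such that for every $k\in\mathbb Z_+$, every $\mathbf y=(y_1,\dots,y_k)\in\mathbb R_+^k$ and every $n\ge n_0$, $$\sup_{t\ge0}R^{(n)}_\beta(t,k,\mathbf y)\le C\sum_{j=1}^k(1+y_j).$$
   Context: Notation: $\mathbb Z_+=\{1,2,\dots\}$, $\mathbb R_+=[0,\infty)$. For each $n\ge1$: $\lambda^{(n)}>0$; a probability $\Lambda^{(n)}$ on $\mathbb R_+$ with tail $\bar\Lambda^{(n)}(t)=\Lambda^{(n)}((t,\infty))$, $\eta^{(n)}=\int_0^\infty y\Lambda^{(n)}(dy)$, $\sigma^{(n)}=\frac12\int_0^\infty y^2\Lambda^{(n)}(dy)$ finite; probability laws $(p_k^{(n)})_{k\ge1}$, $(q_k^{(n)})_{k\ge1}$ on $\mathbb Z_+$ with generating functions $g^{(n)},h^{(n)}$, $m^{(n)}=\sum_kkp_k^{(n)}<\infty$; $\gamma_n>0$ with $\gamma_n\to\infty$, $\gamma_n/n\to\gamma_*\in[0,\infty)$. $\phi^{(n)}(z)=n\gamma_n[g^{(n)}(1-z/n)-(1-z/n)]$, $\psi^{(n)}(z)=\gamma_n[1-h^{(n)}(1-z/n)]$ for $z\in[0,n]$. Condition 1: (i) $\lambda^{(n)}\to\lambda>0$, $\eta^{(n)}\to\eta>0$, $\sigma^{(n)}\to\sigma>0$, $\gamma_n(1-\lambda^{(n)}\eta^{(n)})\to b\in\mathbb R$; (ii) $\psi^{(n)}\to\psi$ uniformly on compacts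 of $[0,\infty)$; (iii) $\{\phi^{(n)}\}$ is uniformly Lipschitz on bounded intervals and converges uniformly on compacts to a continuous $\phi$. Under Condition 1, $\lambda\eta=1$ and $m:=\lim_n\gamma_n(1-m^{(n)})$ exists (so $\gamma_n(1-\lambda^{(n)}\eta^{(n)}m^{(n)})\to b+m$). Condition 2 (for some $\alpha\in(1,2)$): (1) there are $C,k_0>0$ with $n\gamma_n\sum_{k\ge k_0}(k/n)^\alpha p^{(n)}_k+\sum_kk^\alpha q^{(n)}_k\le C$ for all $n$, and $\lim_{k_1\to\infty}\limsup_n\gamma_n\sum_{k\ge k_1}kp^{(n)}_k=0$; (2) there are $C_0>0$ and a probability $\Lambda^*$ on $\mathbb R_+$ with $\int t^{2\alpha}\Lambda^*(dt)<\infty$ and $\bar\Lambda^{(n)}\le C_0\bar\Lambda^*$ for all $n$. Fix $\beta\in[0,\infty)$ with $\beta>-(b+m)/(\sigma\lambda)$. Let $R^{(n)}$ be the unique locally integrable solution of $R^{(n)}(t)=\lambda^{(n)}m^{(n)}\bar\Lambda^{(n)}(t)+\lambda^{(n)}m^{(n)}\int_0^tR^{(n)}(t-s)\bar\Lambda^{(n)}(s)ds$, $t\ge0$, and $R^{(n)}_\beta(t)=e^{-\beta t/\gamma_n}R^{(n)}(t)$. For $k\in\mathbb Z_+$, $\mathbf y=(y_1,\dots,y_k)\in\mathbb R_+^k$: $R^{(n)}(t,k,\mathbf y)=\sum_{j=1}^k\big[\lambda^{(n)}\mathbf 1_{\{y_j>t\}}+\lambda^{(n)}\int_0^tR^{(n)}(t-s)\mathbf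 1_{\{y_j>s\}}ds\big]$ and $R^{(n)}_\beta(t,k,\mathbf y)=e^{-\beta t/\gamma_n}R^{(n)}(t,k,\mathbf y)$. *)

theory Defs
  imports "HOL-Probability.Probability"
begin

text \<open>Generating function of a law on the positive integers (given as a nat pmf with no mass at 0).\<close>
definition gf :: "nat pmf \<Rightarrow> real \<Rightarrow> real" where
  "gf p s = (\<Sum>k. pmf p k * s ^ k)"

definition pmean :: "nat pmf \<Rightarrow> real" where
  "pmean p = (\<Sum>k. real k * pmf p k)"

definition tail :: "real measure \<Rightarrow> real \<Rightarrow> real" where
  "tail L t = measure L {t<..}"

definition phin :: "real \<Rightarrow> nat pmf \<Rightarrow> nat \<Rightarrow> real \<Rightarrow> real" where
  "phin gam p n z = real n * gam * (gf p (1 - z / real n) - (1 - z / real n))"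

definition psin :: "real \<Rightarrow> nat pmf \<Rightarrow> nat \<Rightarrow> real \<Rightarrow> real" where
  "psin gam q n z = gam * (1 - gf q (1 - z / real n))"

definition prob_on_Rplus :: "real measure \<Rightarrow> bool" where
  "prob_on_Rplus L \<longleftrightarrow> prob_space L \<and> sets L = sets borel \<and> measure L {..<0} = 0"

definition renewal_solution :: "real \<Rightarrow> real measure \<Rightarrow> (real \<Rightarrow> real) \<Rightarrow> bool" where
  "renewal_solution c L R \<longleftrightarrow>
     (\<forall>T\<ge>0. set_integrable lborel {0..T} R) \<and>
     (\<forall>t\<ge>0. R t = c * tail L t + c * (LINT s:{0..t}|lborel. R (t - s) * tail L s))"

definition Rky :: "real \<Rightarrow> (real \<Rightarrow> real) \<Rightarrow> real \<Rightarrow> nat \<Rightarrow> (nat \<Rightarrow> real) \<Rightarrow> real" where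
  "Rky lam R t k y =
     (\<Sum>j=1..k. lam * indicator {t<..} (y j)
                + lam * (LINT s:{0..t}|lborel. R (t - s) * indicator {s<..} (y j)))"

end

theory Submission
  imports Defs
begin

lemma reflect_integrable:
  fixes f :: "real \<Rightarrow> real"
  assumes "set_integrable lborel {0..t} f"
  shows "set_integrable lborel {0..t} (\<lambda>s. f (t - s))"
proof -
  have "integrable lborel (\<lambda>x. indicator {0..t} x *\<^sub>R f x)"
    using assms by (simp add: set_integrable_def)
  from lborel_integrable_real_affine[OF this, of "-1" t]
  have "integrable lborel (\<lambda>x. indicator {0..t} (t + - 1 * x) *\<^sub>R f (t + - 1 * x))" by simp
  moreover have "(\<lambda>x. indicator {0..t} (t + - 1 * x) *\<^sub>R f (t + - 1 * x)) = (\<lambda>x. indicator {0..t} x *\<^sub>R f (t - x))"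
    by (rule ext) (auto simp: indicator_def)
  ultimately show ?thesis unfolding set_integrable_def by simp
qed

lemma reflect_integral:
  fixes f :: "real \<Rightarrow> real"
  shows "(LINT s:{0..t}|lborel. f (t - s)) = (LINT x:{0..t}|lborel. f x)"
proof -
  have "(LINT x:{0..t}|lborel. f x) = \<bar>-1\<bar> *\<^sub>R (\<integral>x. indicator {0..t} (t + - 1 * x) *\<^sub>R f (t + - 1 * x) \<partial>lborel)"
    unfolding set_lebesgue_integral_def by (rule lborel_integral_real_affine) simp
  moreover have "(\<lambda>x. indicator {0..t} (t + - 1 * x) *\<^sub>R f (t + - 1 * x)) = (\<lambda>x. indicator {0..t} x *\<^sub>R f (t - x))"
    by (rule ext) (auto simp: indicator_def)
  ultimately show ?thesis unfolding set_lebesgue_integral_def by simp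
qed

lemma shift_integral:
  fixes f :: "real \<Rightarrow> real"
  shows "(LINT t:{x..a}|lborel. f (t - x)) = (LINT r:{0..a-x}|lborel. f r)"
proof -
  have "(LINT r:{0..a-x}|lborel. f r) = \<bar>1\<bar> *\<^sub>R (\<integral>t. indicator {0..a-x} (- x + 1 * t) *\<^sub>R f (- x + 1 * t) \<partial>lborel)"
    unfolding set_lebesgue_integral_def by (rule lborel_integral_real_affine) simp
  moreover have "(\<lambda>t. indicator {0..a-x} (- x + 1 * t) *\<^sub>R f (- x + 1 * t)) = (\<lambda>t. indicator {x..a} t *\<^sub>R f (t - x))"
    by (rule ext) (auto simp: indicator_def)
  ultimately show ?thesis unfolding set_lebesgue_integral_def by simp
qed

lemma set_integrable_mult_bounded:
  fixes f g :: "real \<Rightarrow> real"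
  assumes "set_integrable lborel A f" "g \<in> borel_measurable borel" "\<And>x. x \<in> A \<Longrightarrow> \<bar>g x\<bar> \<le> B"
  shows "set_integrable lborel A (\<lambda>x. f x * g x)"
proof (rule set_integrable_bound[of _ _ "\<lambda>x. B * f x"])
  show "set_integrable lborel A (\<lambda>x. B * f x)" using assms(1) by (rule set_integrable_mult_right)
  have "(\<lambda>x. indicator A x *\<^sub>R f x) \<in> borel_measurable lborel"
    using assms(1) unfolding set_integrable_def by (rule borel_measurable_integrable)
  then have "(\<lambda>x. (indicator A x *\<^sub>R f x) * g x) \<in> borel_measurable lborel"
    using assms(2) by measurable
  then show "set_borel_measurable lborel A (\<lambda>x. f x * g x)"
    unfolding set_borel_measurable_def by (simp add: mult.assoc)
  show "AE x in lborel. x \<in> A \<longrightarrow> norm (f x * g x) \<le> norm (B * f x)"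
  proof (rule AE_I2, rule impI)
    fix x assume "x \<in> A"
    then have "\<bar>g x\<bar> \<le> B" by (rule assms(3))
    then have "\<bar>f x\<bar> * \<bar>g x\<bar> \<le> \<bar>f x\<bar> * \<bar>B\<bar>" by (intro mult_left_mono) auto
    then show "norm (f x * g x) \<le> norm (B * f x)" by (simp add: abs_mult mult.commute)
  qed
qed

lemma pair_integrable_prod:
  fixes f g :: "real \<Rightarrow> real"
  assumes "pair_sigma_finite M1 M2" "integrable M1 f" "integrable M2 g"
  shows "integrable (M1 \<Otimes>\<^sub>M M2) (\<lambda>(x,y). f x * g y)"
proof -
  interpret pair_sigma_finite M1 M2 by fact
  have [measurable]: "f \<in> borel_measurable M1" "g \<in> borel_measurable M2"
    using assms by (auto intro: borel_measurable_integrable)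
  show ?thesis
  proof (rule Fubini_integrable)
    show "(\<lambda>(x,y). f x * g y) \<in> borel_measurable (M1 \<Otimes>\<^sub>M M2)" by measurable
    have "integrable M1 (\<lambda>x. \<bar>f x\<bar> * (\<integral>y. \<bar>g y\<bar> \<partial>M2))"
      using assms(2) by (intro integrable_mult_left integrable_abs)
    then show "integrable M1 (\<lambda>x. \<integral>y. norm (case (x, y) of (x, y) \<Rightarrow> f x * g y) \<partial>M2)"
      by (simp add: abs_mult)
    show "AE x in M1. integrable M2 (\<lambda>y. case (x, y) of (x, y) \<Rightarrow> f x * g y)"
      using assms(3) by auto
  qed
qed

lemma integral_power_Icc:
  assumes "0 \<le> t"
  shows "(LINT x:{0..t}|lborel. x ^ j) = t ^ Suc j / Suc j"
    and "set_integrable lborel {0..t} (\<lambda>x::real. x ^ j)"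
proof -
  show "set_integrable lborel {0..t} (\<lambda>x::real. x ^ j)"
    by (intro borel_integrable_atLeastAtMost') (intro continuous_intros)
  have "integral\<^sup>L lborel (\<lambda>x. indicator {0 .. t} x *\<^sub>R x ^ j) = t ^ Suc j / Suc j - 0 ^ Suc j / Suc j"
  proof (rule integral_FTC_atLeastAtMost[OF assms])
    fix x :: real
    have "((\<lambda>x. x ^ Suc j / Suc j) has_real_derivative (real (Suc j) * x ^ (Suc j - Suc 0) / Suc j)) (at x)"
      by (intro DERIV_cdivide) (rule DERIV_pow)
    then have "((\<lambda>x. x ^ Suc j / Suc j) has_real_derivative x ^ j) (at x)" by simp
    then show "((\<lambda>x. x ^ Suc j / Suc j) has_vector_derivative x ^ j) (at x within {0..t})"
      by (simp add: has_real_derivative_iff_has_vector_derivative[symmetric] has_field_derivative_at_within)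
  qed (intro continuous_intros)
  then show "(LINT x:{0..t}|lborel. x ^ j) = t ^ Suc j / Suc j"
    by (simp add: set_lebesgue_integral_def)
qed

lemma set_integral_nonneg':
  fixes f :: "real \<Rightarrow> real"
  assumes "\<And>x. x \<in> A \<Longrightarrow> 0 \<le> f x"
  shows "0 \<le> (LINT x:A|M. f x)"
  unfolding set_lebesgue_integral_def
  by (rule Bochner_Integration.integral_nonneg) (auto simp: indicator_def assms)

lemma set_integral_mono_set:
  fixes f :: "real \<Rightarrow> real"
  assumes "set_integrable M B f" "A \<in> sets M" "A \<subseteq> B" "\<And>x. x \<in> B \<Longrightarrow> 0 \<le> f x"
  shows "(LINT x:A|M. f x) \<le> (LINT x:B|M. f x)"
proof -
  have "set_integrable M A f" by (rule set_integrable_subset[OF assms(1-3)])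
  then show ?thesis
    using assms unfolding set_lebesgue_integral_def set_integrable_def
    by (intro integral_mono) (auto simp: indicator_def)
qed

lemma set_integrable_const_Icc: "set_integrable lborel {a..b::real} (\<lambda>_. c::real)"
  using borel_integrable_atLeastAtMost'[of a b "\<lambda>_. c"] by simp

lemma set_integrable_bounded_Icc:
  fixes g :: "real \<Rightarrow> real"
  assumes "g \<in> borel_measurable borel" "\<And>x. x \<in> {a..b} \<Longrightarrow> \<bar>g x\<bar> \<le> B"
  shows "set_integrable lborel {a..b} g"
  using set_integrable_mult_bounded[OF set_integrable_const_Icc[of a b 1] assms] by simp

locale renew =
  fixes K u :: "real \<Rightarrow> real" and c :: real
  assumes K_meas: "K \<in> borel_measurable borel"
    and K_nn: "\<And>t. 0 \<le> K t" and K_le: "\<And>t. K t \<le> c"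
    and u_int: "\<And>T. 0 \<le> T \<Longrightarrow> set_integrable lborel {0..T} u"
    and u_eq: "\<And>t. 0 \<le> t \<Longrightarrow> u t = K t + (LINT s:{0..t}|lborel. u (t - s) * K s)"
    and K_mass: "\<And>r. (LINT x:{0..r}|lborel. K x) \<le> 1"
begin

lemma c_nn: "0 \<le> c" using K_nn[of 0] K_le[of 0] by linarith

lemma K_int: "set_integrable lborel {a..b} K"
  by (rule set_integrable_bounded_Icc[OF K_meas, where B=c]) (use K_nn K_le in \<open>auto simp: abs_of_nonneg\<close>)

lemma conv_int: "0 \<le> t \<Longrightarrow> set_integrable lborel {0..t} (\<lambda>s. u (t - s) * K s)"
  by (rule set_integrable_mult_bounded[OF reflect_integrable[OF u_int] K_meas, where B=c])
     (use K_nn K_le in \<open>auto simp: abs_of_nonneg\<close>)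

definition N :: "real \<Rightarrow> real" where "N t = max 0 (- u t)"

lemma N_nn: "0 \<le> N t" by (simp add: N_def)

lemma N_int: "0 \<le> T \<Longrightarrow> set_integrable lborel {0..T} N"
proof (rule set_integrable_bound[OF u_int])
  assume T: "0 \<le> T"
  have "(\<lambda>x. indicator {0..T} x *\<^sub>R u x) \<in> borel_measurable lborel"
    using u_int[OF T] unfolding set_integrable_def by (rule borel_measurable_integrable)
  then have "(\<lambda>x. max 0 (- (indicator {0..T} x *\<^sub>R u x))) \<in> borel_measurable lborel"
    by measurable
  moreover have "(\<lambda>x. max 0 (- (indicator {0..T} x *\<^sub>R u x))) = (\<lambda>x. indicator {0..T} x *\<^sub>R N x)"
    by (rule ext) (auto simp: indicator_def N_def)
  ultimately show "set_borel_measurable lborel {0..T} N"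
    unfolding set_borel_measurable_def by simp
  show "AE x in lborel. x \<in> {0..T} \<longrightarrow> norm (N x) \<le> norm (u x)"
    by (auto simp: N_def)
qed

lemma N_bound: assumes t: "0 \<le> t" shows "N t \<le> c * (LINT x:{0..t}|lborel. N x)"
proof -
  have i1: "set_integrable lborel {0..t} (\<lambda>s. N (t - s) * K s)"
    by (rule set_integrable_mult_bounded[OF reflect_integrable[OF N_int[OF t]] K_meas, where B=c])
       (use K_nn K_le in \<open>auto simp: abs_of_nonneg\<close>)
  have i2: "set_integrable lborel {0..t} (\<lambda>s. c * N (t - s))"
    using reflect_integrable[OF N_int[OF t]] by (rule set_integrable_mult_right)
  have "0 \<le> (LINT s:{0..t}|lborel. N (t - s) * K s + u (t - s) * K s)"
  proof (rule set_integral_nonneg')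
    fix s
    have "0 \<le> (N (t - s) + u (t - s)) * K s" by (intro mult_nonneg_nonneg) (auto simp: K_nn N_def)
    then show "0 \<le> N (t - s) * K s + u (t - s) * K s" by (simp add: distrib_right)
  qed
  also have "\<dots> = (LINT s:{0..t}|lborel. N (t - s) * K s) + (LINT s:{0..t}|lborel. u (t - s) * K s)"
    by (rule set_integral_add(2)[OF i1 conv_int[OF t]])
  finally have a: "- (LINT s:{0..t}|lborel. u (t - s) * K s) \<le> (LINT s:{0..t}|lborel. N (t - s) * K s)"
    by linarith
  have "(LINT s:{0..t}|lborel. N (t - s) * K s) \<le> (LINT s:{0..t}|lborel. c * N (t - s))"
    by (rule set_integral_mono[OF i1 i2]) (use K_le N_nn in \<open>auto simp: mult.commute intro: mult_right_mono\<close>)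
  also have "\<dots> = c * (LINT x:{0..t}|lborel. N x)"
    by (simp add: reflect_integral)
  finally have b: "- u t \<le> c * (LINT x:{0..t}|lborel. N x)"
    using a u_eq[OF t] K_nn[of t] by linarith
  have "0 \<le> c * (LINT x:{0..t}|lborel. N x)"
    by (intro mult_nonneg_nonneg c_nn set_integral_nonneg') (simp add: N_nn)
  with b show ?thesis by (simp add: N_def)
qed

lemma N_zero: assumes t: "0 \<le> t" shows "N t = 0"
proof -
  define B where "B = c * (LINT x:{0..t}|lborel. N x)"
  have B: "N x \<le> B" if "x \<in> {0..t}" for x
  proof -
    have "N x \<le> c * (LINT y:{0..x}|lborel. N y)" using that by (intro N_bound) auto
    also have "\<dots> \<le> B" unfolding B_def
      by (intro mult_left_mono c_nn set_integral_mono_set[OF N_int[OF t]]) (use that N_nn in auto)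
    finally show ?thesis .
  qed
  have ind: "\<forall>x\<in>{0..t}. N x \<le> B * (c * x) ^ j / fact j" for j
  proof (induction j)
    case 0 then show ?case using B by simp
  next
    case (Suc j)
    show ?case
    proof
      fix x assume x: "x \<in> {0..t}"
      have "N x \<le> c * (LINT y:{0..x}|lborel. N y)" using x by (intro N_bound) auto
      also have "(LINT y:{0..x}|lborel. N y) \<le> (LINT y:{0..x}|lborel. (B * c ^ j / fact j) * y ^ j)"
      proof (rule set_integral_mono)
        show "set_integrable lborel {0..x} N" using x by (intro N_int) auto
        show "set_integrable lborel {0..x} (\<lambda>y. B * c ^ j / fact j * y ^ j)"
          using x by (intro set_integrable_mult_right integral_power_Icc(2)) auto
        fix y assume "y \<in> {0..x}"
        then have "y \<in> {0..t}" using x by auto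
        then have "N y \<le> B * (c * y) ^ j / fact j" using Suc.IH by blast
        moreover have "B * (c * y) ^ j / fact j = B * c ^ j / fact j * y ^ j"
          by (simp add: power_mult_distrib field_simps)
        ultimately show "N y \<le> B * c ^ j / fact j * y ^ j" by simp
      qed
      also have "\<dots> = B * c ^ j / fact j * (x ^ Suc j / Suc j)"
        using x by (simp add: integral_power_Icc(1))
      finally have "N x \<le> c * (B * c ^ j / fact j * (x ^ Suc j / Suc j))"
        using c_nn by (metis mult_left_mono order_trans order_refl)
      also have "\<dots> = B * (c * x) ^ Suc j / fact (Suc j)"
        by (simp add: power_mult_distrib field_simps)
      finally show "N x \<le> B * (c * x) ^ Suc j / fact (Suc j)" .
    qed
  qed
  have lim: "(\<lambda>j. B * (inverse (fact j) * (c * t) ^ j)) \<longlonglongrightarrow> B * 0"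
    by (intro tendsto_mult tendsto_const summable_LIMSEQ_zero summable_exp)
  show ?thesis
  proof (rule ccontr)
    assume "N t \<noteq> 0"
    then have "0 < N t" using N_nn[of t] by linarith
    then have "eventually (\<lambda>j. B * (inverse (fact j) * (c * t) ^ j) < N t) sequentially"
      using lim by (intro order_tendstoD(2)) auto
    then obtain j where "B * (inverse (fact j) * (c * t) ^ j) < N t"
      by (auto simp: eventually_sequentially)
    moreover have "N t \<le> B * (c * t) ^ j / fact j" using ind[of j] t by auto
    ultimately show False by (simp add: field_simps)
  qed
qed

lemma u_nn: "0 \<le> t \<Longrightarrow> 0 \<le> u t"
  using N_zero[of t] by (simp add: N_def)

definition k :: "real \<Rightarrow> real" where "k r = (LINT x:{0..r}|lborel. K x)"

lemma k_nn: "0 \<le> k r" unfolding k_def by (rule set_integral_nonneg') (simp add: K_nn)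

lemma k_le1: "k r \<le> 1" unfolding k_def by (rule K_mass)

lemma k_neg: "r < 0 \<Longrightarrow> k r = 0" unfolding k_def by (simp add: set_lebesgue_integral_def)

lemma k_le: assumes "0 \<le> r" shows "k r \<le> c * r"
proof -
  have "k r \<le> (LINT x:{0..r}|lborel. c)"
    unfolding k_def by (rule set_integral_mono[OF K_int set_integrable_const_Icc]) (simp add: K_le)
  also have "\<dots> = c * r" using assms by (simp add: set_integral_const)
  finally show ?thesis .
qed

lemma k_mono: "mono k"
proof
  fix r r' :: real assume "r \<le> r'"
  show "k r \<le> k r'"
  proof (cases "r < 0")
    case True then show ?thesis using k_neg k_nn by simp
  next
    case False
    then show ?thesis unfolding k_def using \<open>r \<le> r'\<close>
      by (intro set_integral_mono_set[OF K_int]) (auto simp: K_nn)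
  qed
qed

lemma k_meas[measurable]: "k \<in> borel_measurable borel"
  using k_mono by (rule borel_measurable_mono)

lemma u_meas: "(\<lambda>x. indicator {0..a} x * u x) \<in> borel_measurable lborel" if "0 \<le> a"
  using u_int[OF that] unfolding set_integrable_def by (auto dest: borel_measurable_integrable)


end

context renew begin
lemma u_integral_eq: assumes a: "0 \<le> a"
  shows "(LINT x:{0..a}|lborel. u x) = k a + (LINT s:{0..a}|lborel. u s * k (a - s))"
proof -
  define conv where "conv t = (LINT s:{0..t}|lborel. u (t - s) * K s)" for t
  have "(LINT x:{0..a}|lborel. u x) = (LINT t:{0..a}|lborel. K t + conv t)"
    by (rule set_lebesgue_integral_cong) (simp, use u_eq in \<open>simp add: conv_def\<close>)
  moreover have ci: "set_integrable lborel {0..a} conv"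
  proof -
    have "set_integrable lborel {0..a} (\<lambda>t. u t - K t)"
      using u_int[OF a] K_int by (rule set_integral_diff(1))
    moreover have eqs: "\<And>t. t \<in> {0..a} \<Longrightarrow> u t - K t = conv t"
      unfolding conv_def by (subst u_eq) auto
    have "set_integrable lborel {0..a} (\<lambda>t. u t - K t) = set_integrable lborel {0..a} conv"
      by (rule set_integrable_cong) (auto intro: eqs)
    ultimately show ?thesis by simp
  qed
  ultimately have e1: "(LINT x:{0..a}|lborel. u x) = k a + (LINT t:{0..a}|lborel. conv t)"
    using set_integral_add(2)[OF K_int ci] by (simp add: k_def)
  define G where "G x t = (indicator {0..a} x * u x) * (indicator {0..a} t * indicator {..t} x * K (t - x))" for x t :: real
  have conv_eq: "conv t = (LINT x:{0..t}|lborel. u x * K (t - x))" for t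
    unfolding conv_def using reflect_integral[where f="\<lambda>x. u x * K (t - x)" and t=t] by simp
  have lhs: "(LINT t:{0..a}|lborel. conv t) = (\<integral>t. (\<integral>x. G x t \<partial>lborel) \<partial>lborel)"
    unfolding set_lebesgue_integral_def
  proof (rule Bochner_Integration.integral_cong[OF refl])
    fix t
    show "indicator {0..a} t *\<^sub>R conv t = (\<integral>x. G x t \<partial>lborel)"
    proof (cases "t \<in> {0..a}")
      case True
      then show ?thesis unfolding conv_eq set_lebesgue_integral_def G_def
        by (simp, intro Bochner_Integration.integral_cong) (auto simp: indicator_def)
    next
      case False
      then show ?thesis unfolding G_def by simp
    qed
  qed
  have rhs: "(LINT x:{0..a}|lborel. u x * k (a - x)) = (\<integral>x. (\<integral>t. G x t \<partial>lborel) \<partial>lborel)"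
    unfolding set_lebesgue_integral_def
  proof (rule Bochner_Integration.integral_cong[OF refl])
    fix x
    show "indicator {0..a} x *\<^sub>R (u x * k (a - x)) = (\<integral>t. G x t \<partial>lborel)"
    proof (cases "x \<in> {0..a}")
      case True
      have "k (a - x) = (LINT t:{x..a}|lborel. K (t - x))"
        unfolding k_def by (rule shift_integral[symmetric])
      also have "\<dots> = (\<integral>t. indicator {0..a} t * indicator {..t} x * K (t - x) \<partial>lborel)"
        unfolding set_lebesgue_integral_def
        by (intro Bochner_Integration.integral_cong) (use True in \<open>auto simp: indicator_def\<close>)
      finally show ?thesis using True unfolding G_def by simp
    next
      case False
      then show ?thesis unfolding G_def by simp
    qed
  qed
  have Psf: "pair_sigma_finite lborel lborel"
    by (intro pair_sigma_finite.intro) (rule lborel.sigma_finite_measure_axioms)+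
  have Gint: "integrable (lborel \<Otimes>\<^sub>M lborel) (\<lambda>(x, t). G x t)"
  proof (rule Bochner_Integration.integrable_bound)
    show "integrable (lborel \<Otimes>\<^sub>M lborel) (\<lambda>(x, t). (indicator {0..a} x * u x) * (c * indicator {0..a} t))"
    proof (rule pair_integrable_prod)
      show "pair_sigma_finite lborel lborel" by (rule Psf)
      show "integrable lborel (\<lambda>x. indicator {0..a} x * u x)"
        using u_int[OF a] by (simp add: set_integrable_def)
      show "integrable lborel (\<lambda>t. c * indicator {0..a} t)"
        using set_integrable_const_Icc[of 0 a c] by (simp add: set_integrable_def mult.commute)
    qed
    have [measurable]: "(\<lambda>x. indicator {0..a} x * u x) \<in> borel_measurable lborel" by (rule u_meas[OF a])
    note K_meas[measurable]
    have m1: "(\<lambda>p. indicator {0..a} (fst p) * u (fst p)) \<in> borel_measurable (lborel \<Otimes>\<^sub>M lborel)"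
      using measurable_compose[OF measurable_fst u_meas[OF a]] by (simp add: comp_def)
    have m2: "(\<lambda>p. indicator {0..a} (snd p) * (if fst p \<le> snd p then 1 else 0) * K (snd p - fst p)) \<in> borel_measurable (lborel \<Otimes>\<^sub>M lborel)"
      by measurable
    have "(\<lambda>p. (indicator {0..a} (fst p) * u (fst p)) * (indicator {0..a} (snd p) * (if fst p \<le> snd p then 1 else 0) * K (snd p - fst p))) \<in> borel_measurable (lborel \<Otimes>\<^sub>M lborel)"
      using m1 m2 by (rule borel_measurable_times)
    moreover have "(\<lambda>(x, t). G x t) = (\<lambda>p. (indicator {0..a} (fst p) * u (fst p)) * (indicator {0..a} (snd p) * (if fst p \<le> snd p then 1 else 0) * K (snd p - fst p)))"
      by (rule ext) (auto simp: G_def indicator_def)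
    ultimately show "(\<lambda>(x, t). G x t) \<in> borel_measurable (lborel \<Otimes>\<^sub>M lborel)" by simp
    show "AE p in lborel \<Otimes>\<^sub>M lborel. norm ((\<lambda>(x, t). G x t) p) \<le> norm ((\<lambda>(x, t). (indicator {0..a} x * u x) * (c * indicator {0..a} t)) p)"
    proof (rule AE_I2, clarify)
      fix x t :: real
      have "\<bar>indicator {0..a} t * indicator {..t} x * K (t - x)\<bar> \<le> \<bar>c * indicator {0..a} t\<bar>"
        using K_nn[of "t-x"] K_le[of "t-x"] c_nn by (auto simp: indicator_def)
      then show "norm (G x t) \<le> norm (indicator {0..a} x * u x * (c * indicator {0..a} t))"
        unfolding G_def by (simp add: abs_mult mult_left_mono)
    qed
  qed
  have "(\<integral>t. (\<integral>x. G x t \<partial>lborel) \<partial>lborel) = (\<integral>x. (\<integral>t. G x t \<partial>lborel) \<partial>lborel)"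
    by (rule pair_sigma_finite.Fubini_integral[OF Psf]) (use Gint in simp)
  then show ?thesis using e1 lhs rhs by simp
qed

end

context renew begin

lemma uk_int: assumes "0 \<le> b" "A \<subseteq> {0..b}" "A \<in> sets lborel"
  shows "set_integrable lborel A (\<lambda>s. u s * k (d - s))"
proof -
  have "set_integrable lborel {0..b} (\<lambda>s. u s * k (d - s))"
    by (rule set_integrable_mult_bounded[OF u_int[OF assms(1)], where B=1]) (auto simp: k_nn k_le1 abs_of_nonneg)
  then show ?thesis by (rule set_integrable_subset[OF _ assms(3,2)])
qed

lemma window: assumes a: "0 \<le> a" and h: "0 \<le> h" and ch: "c * h \<le> 1/2"
  shows "(LINT x:{a<..a+h}|lborel. u x) \<le> 2"
proof -
  define W where "W = (LINT x:{a<..a+h}|lborel. u x)"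
  have iW: "set_integrable lborel {a<..a+h} u"
    by (rule set_integrable_subset[OF u_int[of "a+h"]]) (use a h in auto)
  have ia: "set_integrable lborel {0..a} u" by (rule u_int[OF a])
  have un: "{0..a+h} = {0..a} \<union> {a<..a+h}" using a h by auto
  have hU: "(LINT x:{0..a+h}|lborel. u x) = (LINT x:{0..a}|lborel. u x) + W"
    unfolding W_def un by (rule set_integral_Un[OF _ ia iW]) auto
  define A0 where "A0 = (LINT s:{0..a}|lborel. u s * k (a - s))"
  define A1 where "A1 = (LINT s:{0..a}|lborel. u s * k (a + h - s))"
  define A2 where "A2 = (LINT s:{a<..a+h}|lborel. u s * k (a + h - s))"
  have I1: "(LINT s:{0..a+h}|lborel. u s * k (a + h - s)) = A1 + A2"
    unfolding A1_def A2_def un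
    by (rule set_integral_Un) (use a h in \<open>auto intro!: uk_int[of "a+h"]\<close>)
  have P2h: "(LINT x:{0..a+h}|lborel. u x) = k (a+h) + A1 + A2"
    using u_integral_eq[of "a+h"] I1 a h by simp
  have P2a: "(LINT x:{0..a}|lborel. u x) = k a + A0"
    using u_integral_eq[OF a] by (simp add: A0_def)
  have A1le: "A1 \<le> (LINT x:{0..a}|lborel. u x)"
    unfolding A1_def
    by (rule set_integral_mono[OF uk_int[OF a] ia])
       (auto intro!: mult_left_le u_nn k_le1)
  have A2le: "A2 \<le> (LINT x:{a<..a+h}|lborel. (c * h) * u x)"
    unfolding A2_def
  proof (rule set_integral_mono[OF uk_int[of "a+h"]])
    show "set_integrable lborel {a<..a+h} (\<lambda>x. c * h * u x)" using iW by (rule set_integrable_mult_right)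
    fix s assume s: "s \<in> {a<..a+h}"
    then have "k (a + h - s) \<le> c * (a + h - s)" by (intro k_le) auto
    also have "\<dots> \<le> c * h" using s c_nn by (intro mult_left_mono) auto
    finally have "u s * k (a + h - s) \<le> u s * (c * h)"
      using s a by (intro mult_left_mono u_nn) auto
    then show "u s * k (a + h - s) \<le> c * h * u s" by (simp add: mult.commute)
  qed (use a h in auto)
  have Wnn: "0 \<le> W" unfolding W_def by (rule set_integral_nonneg') (use a in \<open>auto intro: u_nn\<close>)
  have "W \<le> 1 + c * h * W"
    using hU P2h P2a A1le A2le k_le1[of "a+h"] unfolding W_def by simp
  also have "\<dots> \<le> 1 + W / 2"
  proof -
    have "c * h * W \<le> (1/2) * W" by (rule mult_right_mono[OF ch Wnn])
    then show ?thesis by simp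
  qed
  finally show ?thesis unfolding W_def by simp
qed

lemma window_N: assumes a: "0 \<le> a" and h: "0 \<le> h" and ch: "c * h \<le> 1/2"
  shows "(LINT x:{a<..a + real M * h}|lborel. u x) \<le> 2 * real M"
proof (induction M)
  case 0 then show ?case by (simp add: set_lebesgue_integral_def)
next
  case (Suc M)
  define p where "p = a + real M * h"
  have ap: "a \<le> p" unfolding p_def using h by simp
  have e: "a + real (Suc M) * h = p + h" unfolding p_def by (simp add: algebra_simps)
  have un: "{a<..p + h} = {a<..p} \<union> {p<..p + h}"
    using ap h by auto
  have ii: "set_integrable lborel {0..p + h} u" using a h ap by (intro u_int) simp
  have "(LINT x:{a<..p + h}|lborel. u x) = (LINT x:{a<..p}|lborel. u x) + (LINT x:{p<..p + h}|lborel. u x)"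
    unfolding un
  proof (rule set_integral_Un)
    show "set_integrable lborel {a<..p} u"
      by (rule set_integrable_subset[OF ii]) (use a h ap in auto)
    show "set_integrable lborel {p<..p + h} u"
      by (rule set_integrable_subset[OF ii]) (use a h ap in auto)
  qed auto
  also have "\<dots> \<le> 2 * real M + 2"
    using Suc.IH window[of p h] a h ch ap unfolding p_def by (simp add: add_mono)
  finally show ?case unfolding e by simp
qed

lemma u_tail_bound: assumes t: "0 \<le> t" and y: "0 \<le> y" and h: "0 < h" and ch: "c * h \<le> 1/2"
  shows "(LINT x:{0..t}|lborel. u x * indicator {t - y<..} x) \<le> 2 * (y / h + 1)"
proof -
  define a0 where "a0 = max 0 (t - y)"
  define M where "M = nat \<lceil>y / h\<rceil>"
  define b where "b = a0 + real M * h"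
  have a0: "0 \<le> a0" by (simp add: a0_def)
  have Nh: "y \<le> real M * h"
  proof -
    have "y / h \<le> real M" unfolding M_def by linarith
    then show ?thesis using h by (simp add: field_simps)
  qed
  have Nle: "real M \<le> y / h + 1"
    unfolding M_def using y h by (simp add: of_nat_nat)
  have tb: "t \<le> b" unfolding b_def a0_def using Nh by auto
  have ib: "set_integrable lborel {a0..b} u"
    by (rule set_integrable_subset[OF u_int[of b]]) (use a0 tb t in auto)
  have "(LINT x:{0..t}|lborel. u x * indicator {t - y<..} x) \<le> (LINT x:{a0..b}|lborel. u x)"
    unfolding set_lebesgue_integral_def
  proof (rule integral_mono)
    have "set_integrable lborel {0..t} (\<lambda>x. u x * indicator {t - y<..} x)"
      by (rule set_integrable_mult_bounded[OF u_int[OF t], where B=1]) auto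
    then show "integrable lborel (\<lambda>x. indicator {0..t} x *\<^sub>R (u x * indicator {t - y<..} x))"
      by (simp add: set_integrable_def)
    show "integrable lborel (\<lambda>x. indicator {a0..b} x *\<^sub>R u x)"
      using ib by (simp add: set_integrable_def)
    fix x
    show "indicator {0..t} x *\<^sub>R (u x * indicator {t - y<..} x) \<le> indicator {a0..b} x *\<^sub>R u x"
    proof (cases "x \<in> {0..t} \<and> t - y < x")
      case True
      then have "x \<in> {a0..b}" using tb by (auto simp: a0_def)
      then show ?thesis using True by (simp add: indicator_def)
    next
      case False
      have "0 \<le> indicator {a0..b} x *\<^sub>R u x"
        using a0 by (auto simp: indicator_def intro: u_nn)
      then show ?thesis using False by (auto simp: indicator_def)
    qed
  qed
  also have "(LINT x:{a0..b}|lborel. u x) = (LINT x:{a0<..b}|lborel. u x)"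
  proof -
    have e: "{a0..b} = {a0} \<union> {a0<..b}" using tb a0 t unfolding b_def using Nh y h by auto
    have "(LINT x:{a0..b}|lborel. u x) = (LINT x:{a0}|lborel. u x) + (LINT x:{a0<..b}|lborel. u x)"
      unfolding e
      by (rule set_integral_Un) (auto intro!: set_integrable_subset[OF ib])
    moreover have "(LINT x:{a0}|lborel. u x) = 0"
      unfolding set_lebesgue_integral_def
      by (rule integral_eq_zero_AE, rule eventually_mono[OF AE_lborel_singleton[of a0]]) (simp add: indicator_def)
    ultimately show ?thesis by simp
  qed
  also have "\<dots> \<le> 2 * real M" unfolding b_def by (rule window_N[OF a0 less_imp_le[OF h] ch])
  also have "\<dots> \<le> 2 * (y / h + 1)" using Nle by simp
  finally show ?thesis .
qed

end

lemma exp_neg_le_quad: fixes z :: real assumes "0 \<le> z" shows "exp (- z) \<le> 1 - z + z\<^sup>2 / 2"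
proof -
  let ?g = "\<lambda>x::real. 1 - x + x\<^sup>2 / 2 - exp (- x)"
  have "?g 0 \<le> ?g z"
  proof (rule DERIV_nonneg_imp_nondecreasing[OF assms])
    fix x :: real assume "0 \<le> x" "x \<le> z"
    have "(?g has_real_derivative (- 1 + x + exp (- x))) (at x)"
      by (auto intro!: derivative_eq_intros simp: power2_eq_square)
    moreover have "0 \<le> - 1 + x + exp (- x)" using exp_ge_add_one_self[of "- x"] by linarith
    ultimately show "\<exists>y. (?g has_real_derivative y) (at x) \<and> 0 \<le> y" by blast
  qed
  then show ?thesis by simp
qed

lemma h_le_powr:
  fixes z a :: real
  assumes z: "0 \<le> z" and a: "1 \<le> a" "a \<le> 2"
  shows "exp (- z) - 1 + z \<le> z powr a"
proof (cases "z \<le> 1")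
  case True
  have "exp (- z) - 1 + z \<le> z\<^sup>2 / 2" using exp_neg_le_quad[OF z] by simp
  also have "\<dots> \<le> z powr 2" using z by (simp add: powr_numeral)
  also have "\<dots> \<le> z powr a" using powr_mono'[OF a(2) z True] .
  finally show ?thesis .
next
  case False
  have "exp (- z) \<le> 1" using z by simp
  then have "exp (- z) - 1 + z \<le> z" by simp
  also have "\<dots> = z powr 1" using z by simp
  also have "\<dots> \<le> z powr a" using False a by (intro powr_mono) auto
  finally show ?thesis .
qed

lemma tail_integral:
  assumes L: "prob_on_Rplus L"
  shows "tail L x = (\<integral>y. indicator {x<..} y \<partial>L)"
proof -
  interpret prob_space L using L by (simp add: prob_on_Rplus_def)
  have "sets L = sets borel" using L by (simp add: prob_on_Rplus_def)
  then have "space L = UNIV" using sets_eq_imp_space_eq[of L borel] by simp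
  then show ?thesis by (simp add: tail_def)
qed

lemma tail_bounds:
  assumes L: "prob_on_Rplus L"
  shows "0 \<le> tail L x" "tail L x \<le> 1"
proof -
  interpret prob_space L using L by (simp add: prob_on_Rplus_def)
  show "0 \<le> tail L x" by (simp add: tail_def)
  show "tail L x \<le> 1" by (simp add: tail_def)
qed

lemma tail_antimono:
  assumes L: "prob_on_Rplus L" and "x \<le> x'"
  shows "tail L x' \<le> tail L x"
proof -
  interpret prob_space L using L by (simp add: prob_on_Rplus_def)
  have sL: "sets L = sets borel" using L by (simp add: prob_on_Rplus_def)
  show ?thesis unfolding tail_def
    by (rule finite_measure_mono) (use assms(2) sL in auto)
qed

lemma tail_meas:
  assumes L: "prob_on_Rplus L"
  shows "tail L \<in> borel_measurable borel"
proof -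
  have "mono (\<lambda>x. - tail L x)" using tail_antimono[OF L] by (auto simp: mono_def)
  then have "(\<lambda>x. - tail L x) \<in> borel_measurable borel" by (rule borel_measurable_mono)
  then have "(\<lambda>x. - (- tail L x)) \<in> borel_measurable borel" by measurable
  then show ?thesis by simp
qed

lemma tail_fubini:
  fixes f :: "real \<Rightarrow> real"
  assumes L: "prob_on_Rplus L" and f[measurable]: "f \<in> borel_measurable borel"
    and bnd: "\<And>x. x \<in> {0..r} \<Longrightarrow> \<bar>f x\<bar> \<le> B"
  shows "(LINT x:{0..r}|lborel. f x * tail L x) = (\<integral>y. (LINT x:{0..r}|lborel. f x * indicator {x<..} y) \<partial>L)"
    and "integrable L (\<lambda>y. (LINT x:{0..r}|lborel. f x * indicator {x<..} y))"
proof -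
  interpret L: prob_space L using L by (simp add: prob_on_Rplus_def)
  have sL[measurable_cong]: "sets L = sets borel" using L by (simp add: prob_on_Rplus_def)
  have Psf: "pair_sigma_finite lborel L"
    by (intro pair_sigma_finite.intro lborel.sigma_finite_measure_axioms L.sigma_finite_measure_axioms)
  define H where "H x y = indicator {0..r} x * f x * indicator {x<..} y" for x y :: real
  have fi: "integrable lborel (\<lambda>x. indicator {0..r} x * f x)"
    using set_integrable_bounded_Icc[OF f bnd] by (simp add: set_integrable_def)
  have Hint: "integrable (lborel \<Otimes>\<^sub>M L) (\<lambda>(x, y). H x y)"
  proof (rule Bochner_Integration.integrable_bound)
    show "integrable (lborel \<Otimes>\<^sub>M L) (\<lambda>(x, y). (indicator {0..r} x * f x) * (\<lambda>_. 1) y)"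
      by (rule pair_integrable_prod[OF Psf fi]) simp
    have "(\<lambda>p. indicator {0..r} (fst p) * f (fst p) * (if fst p < snd p then 1 else 0)) \<in> borel_measurable (lborel \<Otimes>\<^sub>M L)"
      by measurable
    moreover have "(\<lambda>(x, y). H x y) = (\<lambda>p. indicator {0..r} (fst p) * f (fst p) * (if fst p < snd p then 1 else 0))"
      by (rule ext) (auto simp: H_def indicator_def)
    ultimately show "(\<lambda>(x, y). H x y) \<in> borel_measurable (lborel \<Otimes>\<^sub>M L)" by simp
    show "AE p in lborel \<Otimes>\<^sub>M L. norm ((\<lambda>(x, y). H x y) p) \<le> norm ((\<lambda>(x, y). (indicator {0..r} x * f x) * (\<lambda>_. 1::real) y) p)"
      by (rule AE_I2) (auto simp: H_def indicator_def)
  qed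
  have "(LINT x:{0..r}|lborel. f x * tail L x) = (\<integral>x. (\<integral>y. H x y \<partial>L) \<partial>lborel)"
    unfolding set_lebesgue_integral_def H_def tail_integral[OF L]
    by (intro Bochner_Integration.integral_cong refl) (simp add: mult.assoc)
  also have "\<dots> = (\<integral>y. (\<integral>x. H x y \<partial>lborel) \<partial>L)"
    by (rule pair_sigma_finite.Fubini_integral[OF Psf, symmetric]) (use Hint in simp)
  also have "\<dots> = (\<integral>y. (LINT x:{0..r}|lborel. f x * indicator {x<..} y) \<partial>L)"
    unfolding set_lebesgue_integral_def H_def by (simp add: mult.assoc)
  finally show "(LINT x:{0..r}|lborel. f x * tail L x) = (\<integral>y. (LINT x:{0..r}|lborel. f x * indicator {x<..} y) \<partial>L)" .
  have "integrable L (\<lambda>y. \<integral>x. H x y \<partial>lborel)"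
    by (rule pair_sigma_finite.integrable_snd[OF Psf]) (use Hint in simp)
  then show "integrable L (\<lambda>y. (LINT x:{0..r}|lborel. f x * indicator {x<..} y))"
    unfolding set_lebesgue_integral_def H_def by (simp add: mult.assoc)
qed

definition Gp :: "real \<Rightarrow> real \<Rightarrow> real" where "Gp a y = (LINT x:{0..y}|lborel. x powr a)"

lemma powr_meas[measurable]: "(\<lambda>x::real. x powr a) \<in> borel_measurable borel"
  by measurable

lemma powr_int_Icc: assumes "0 \<le> a" shows "set_integrable lborel {0..y} (\<lambda>x::real. x powr a)"
  by (rule set_integrable_bounded_Icc[OF powr_meas, where B="y powr a"])
     (use assms in \<open>auto intro: powr_mono2\<close>)

lemma Gp_nn: "0 \<le> Gp a y"
  unfolding Gp_def by (rule set_integral_nonneg') simp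

lemma Gp_mono: assumes "0 \<le> a" shows "mono (Gp a)"
proof
  fix y y' :: real assume "y \<le> y'"
  show "Gp a y \<le> Gp a y'"
  proof (cases "y < 0")
    case True then show ?thesis using Gp_nn[of a y'] by (simp add: Gp_def set_lebesgue_integral_def)
  next
    case False then show ?thesis unfolding Gp_def using \<open>y \<le> y'\<close>
      by (intro set_integral_mono_set[OF powr_int_Icc[OF assms]]) auto
  qed
qed

lemma Gp_meas[measurable]: "0 \<le> a \<Longrightarrow> Gp a \<in> borel_measurable borel"
  by (rule borel_measurable_mono[OF Gp_mono])

lemma Gp_le: assumes a: "0 \<le> a" and y: "0 \<le> y" shows "Gp a y \<le> y powr (a + 1)"
proof -
  have "Gp a y \<le> (LINT x:{0..y}|lborel. y powr a)"
    unfolding Gp_def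
    by (rule set_integral_mono[OF powr_int_Icc[OF a] set_integrable_const_Icc])
       (use a in \<open>auto intro: powr_mono2\<close>)
  also have "\<dots> = y * y powr a" using y by (simp add: set_integral_const)
  also have "\<dots> = y powr (a + 1)" using y by (simp add: powr_add)
  finally show ?thesis .
qed

lemma powr_le_1_plus: assumes y: "0 \<le> (y::real)" and "p \<le> q" "0 \<le> p"
  shows "y powr p \<le> 1 + y powr q"
proof (cases "y \<le> 1")
  case True
  have "y powr p \<le> 1 powr p" using True y assms(3) by (intro powr_mono2) auto
  then have "y powr p \<le> 1" by simp
  then show ?thesis by (smt (verit) powr_ge_zero)
next
  case False
  then have "y powr p \<le> y powr q" using assms by (intro powr_mono) auto
  then show ?thesis by simp
qed

lemma AE_nonneg:
  assumes L: "prob_on_Rplus L" shows "AE y in L. 0 \<le> y"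
proof -
  interpret prob_space L using L by (simp add: prob_on_Rplus_def)
  have sL: "sets L = sets borel" using L by (simp add: prob_on_Rplus_def)
  have m: "measure L {..<0} = 0" using L by (simp add: prob_on_Rplus_def)
  show ?thesis
  proof (rule AE_I[where N="{..<0}"])
    show "{x \<in> space L. \<not> 0 \<le> x} \<subseteq> {..<0}" by auto
    show "{..<0::real} \<in> sets L" using sL by simp
    then show "emeasure L {..<0::real} = 0" using m by (simp add: emeasure_eq_measure)
  qed
qed

lemma ind_swap: "(indicator {x<..} y :: real) = indicator {..<y} x"
  by (simp add: indicator_def)

lemma Ik_le_Gp:
  assumes a: "0 \<le> a" and y: "0 \<le> y"
  shows "(LINT x:{0..r}|lborel. x powr a * indicator {x<..} y) \<le> Gp a y"
proof -
  have "(LINT x:{0..r}|lborel. x powr a * indicator {x<..} y) \<le> (LINT x:{0..r}|lborel. x powr a * indicator {..<y} x)"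
    by (simp add: ind_swap)
  also have "\<dots> \<le> Gp a y"
    unfolding Gp_def set_lebesgue_integral_def
  proof (rule integral_mono)
    show "integrable lborel (\<lambda>x. indicator {0..r} x *\<^sub>R (x powr a * indicator {..<y} x))"
      using set_integrable_mult_bounded[OF powr_int_Icc[OF a, of r], where g="indicator {..<y}" and B=1]
      by (auto simp: set_integrable_def)
    show "integrable lborel (\<lambda>x. indicator {0..y} x *\<^sub>R x powr a)"
      using powr_int_Icc[OF a, of y] by (simp add: set_integrable_def)
  qed (auto simp: indicator_def)
  finally show ?thesis .
qed

lemma Ik_eq_Gp:
  assumes a: "0 \<le> a" and y: "0 \<le> y" and r: "y \<le> r"
  shows "(LINT x:{0..r}|lborel. x powr a * indicator {x<..} y) = Gp a y"
  unfolding Gp_def set_lebesgue_integral_def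
  by (rule integral_cong_AE)
     (use AE_lborel_singleton[of y] y r in \<open>auto elim!: eventually_mono simp: indicator_def\<close>)

lemma moment_bound:
  assumes Lq: "prob_on_Rplus Lq" and Lt: "prob_on_Rplus Lt" and a: "1 \<le> a"
    and C0: "0 \<le> C0" and dom: "\<And>t. 0 \<le> t \<Longrightarrow> tail Lq t \<le> C0 * tail Lt t"
    and intS: "integrable Lt (\<lambda>t. t powr (2 * a))"
  shows "integrable Lq (Gp a)" "(\<integral>y. Gp a y \<partial>Lq) \<le> C0 * (\<integral>y. 1 + y powr (2 * a) \<partial>Lt)"
proof -
  have a0: "0 \<le> a" using a by simp
  interpret Lq: prob_space Lq using Lq by (simp add: prob_on_Rplus_def)
  interpret Lt: prob_space Lt using Lt by (simp add: prob_on_Rplus_def)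
  have sLq[measurable_cong]: "sets Lq = sets borel" using Lq by (simp add: prob_on_Rplus_def)
  have sLt[measurable_cong]: "sets Lt = sets borel" using Lt by (simp add: prob_on_Rplus_def)
  define I where "I k y = (LINT x:{0..real k}|lborel. x powr a * indicator {x<..} y)" for k :: nat and y :: real
  have pb: "\<And>x. x \<in> {0..real k} \<Longrightarrow> \<bar>x powr a\<bar> \<le> real k powr a" for k
    using a by (auto intro: powr_mono2)
  have Ifub: "(\<integral>y. I k y \<partial>L) = (LINT x:{0..real k}|lborel. x powr a * tail L x)"
     "integrable L (I k)" if "prob_on_Rplus L" for L k
  proof -
    have b: "\<And>x. x \<in> {0..real k} \<Longrightarrow> \<bar>x powr a\<bar> \<le> real k powr a" by (rule pb)
    note tf = tail_fubini[OF that powr_meas b]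
    show "(\<integral>y. I k y \<partial>L) = (LINT x:{0..real k}|lborel. x powr a * tail L x)"
      using tf(1) unfolding I_def by simp
    show "integrable L (I k)" using tf(2) unfolding I_def by simp
  qed
  have int1: "integrable Lt (\<lambda>y. 1 + y powr (2 * a))"
    using intS by simp
  have Inn: "0 \<le> I k y" for k y unfolding I_def by (rule set_integral_nonneg') (simp add: indicator_def)
  have Imono: "I k y \<le> I k' y" if "k \<le> k'" for k k' y
  proof -
    have "set_integrable lborel {0..real k'} (\<lambda>x. x powr a * indicator {x<..} y)"
      using set_integrable_mult_bounded[OF powr_int_Icc[OF a0, of "real k'"], where g="indicator {..<y}" and B=1]
      by (simp add: ind_swap)
    then show ?thesis unfolding I_def
      by (rule set_integral_mono_set) (use that in \<open>auto simp: indicator_def\<close>)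
  qed
  have bnd: "(\<integral>y. I k y \<partial>Lq) \<le> C0 * (\<integral>y. 1 + y powr (2 * a) \<partial>Lt)" for k
  proof -
    have tint: "set_integrable lborel {0..real k} (\<lambda>x. x powr a * tail L x)" if "prob_on_Rplus L" for L
      by (rule set_integrable_mult_bounded[OF powr_int_Icc[OF a0] tail_meas[OF that], where B=1])
         (use tail_bounds[OF that] in auto)
    have "(\<integral>y. I k y \<partial>Lq) = (LINT x:{0..real k}|lborel. x powr a * tail Lq x)" by (rule Ifub(1)[OF Lq])
    also have "\<dots> \<le> (LINT x:{0..real k}|lborel. C0 * (x powr a * tail Lt x))"
    proof (rule set_integral_mono[OF tint[OF Lq]])
      show "set_integrable lborel {0..real k} (\<lambda>x. C0 * (x powr a * tail Lt x))"
        using tint[OF Lt] by (rule set_integrable_mult_right)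
      fix x assume "x \<in> {0..real k}"
      then have "tail Lq x \<le> C0 * tail Lt x" by (intro dom) auto
      then have "x powr a * tail Lq x \<le> x powr a * (C0 * tail Lt x)" by (intro mult_left_mono) auto
      then show "x powr a * tail Lq x \<le> C0 * (x powr a * tail Lt x)" by (simp add: mult_ac)
    qed
    also have "\<dots> = C0 * (\<integral>y. I k y \<partial>Lt)" using Ifub(1)[OF Lt] by simp
    also have "\<dots> \<le> C0 * (\<integral>y. 1 + y powr (2 * a) \<partial>Lt)"
    proof (rule mult_left_mono[OF _ C0], rule integral_mono_AE[OF Ifub(2)[OF Lt] int1])
      show "AE y in Lt. I k y \<le> 1 + y powr (2 * a)"
        using AE_nonneg[OF Lt]
      proof (rule eventually_mono)
        fix y :: real assume y: "0 \<le> y"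
        have "I k y \<le> Gp a y" unfolding I_def by (rule Ik_le_Gp[OF a0 y])
        also have "\<dots> \<le> y powr (a + 1)" by (rule Gp_le[OF a0 y])
        also have "\<dots> \<le> 1 + y powr (2 * a)" by (rule powr_le_1_plus) (use y a in auto)
        finally show "I k y \<le> 1 + y powr (2 * a)" .
      qed
    qed
    finally show ?thesis .
  qed
  have inc: "incseq (\<lambda>k. \<integral>y. I k y \<partial>Lq)"
    by (rule incseq_SucI, rule integral_mono[OF Ifub(2)[OF Lq] Ifub(2)[OF Lq]]) (rule Imono, simp)
  obtain Lim where Lim: "(\<lambda>k. \<integral>y. I k y \<partial>Lq) \<longlonglongrightarrow> Lim"
    using incseq_convergent[OF inc, of "C0 * (\<integral>y. 1 + y powr (2 * a) \<partial>Lt)"] bnd by blast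
  have mc: "AE y in Lq. mono (\<lambda>k. I k y)" by (rule AE_I2) (auto intro: monoI Imono)
  have lc: "AE y in Lq. (\<lambda>k. I k y) \<longlonglongrightarrow> Gp a y"
    using AE_nonneg[OF Lq]
  proof (rule eventually_mono)
    fix y :: real assume y: "0 \<le> y"
    obtain N :: nat where N: "y \<le> real N" using real_arch_simple by blast
    have "eventually (\<lambda>k. I k y = Gp a y) sequentially"
      unfolding eventually_sequentially I_def
      by (rule exI[of _ N]) (use N y a0 in \<open>auto intro!: Ik_eq_Gp\<close>)
    then show "(\<lambda>k. I k y) \<longlonglongrightarrow> Gp a y" by (rule tendsto_eventually)
  qed
  have gm: "Gp a \<in> borel_measurable Lq" using Gp_meas[OF a0] by measurable
  show "integrable Lq (Gp a)"
    by (rule integrable_monotone_convergence[OF Ifub(2)[OF Lq] mc lc Lim gm])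
  have "(\<integral>y. Gp a y \<partial>Lq) = Lim"
    by (rule integral_monotone_convergence[OF Ifub(2)[OF Lq] mc lc Lim gm])
  also have "Lim \<le> C0 * (\<integral>y. 1 + y powr (2 * a) \<partial>Lt)"
    by (rule LIMSEQ_le_const2[OF Lim]) (use bnd in auto)
  finally show "(\<integral>y. Gp a y \<partial>Lq) \<le> C0 * (\<integral>y. 1 + y powr (2 * a) \<partial>Lt)" .
qed

lemma exp_int_split:
  fixes s y :: real assumes y: "0 \<le> y" and s: "0 \<le> s" and a: "1 \<le> a" "a \<le> 2"
  shows "(LINT x:{0..y}|lborel. exp (- s * x)) \<le> y - s * ((1/2) * y^2) + s powr a * Gp a y"
proof -
  have ie: "set_integrable lborel {0..y} (\<lambda>x. exp (- s * x))"
    by (intro borel_integrable_atLeastAtMost') (intro continuous_intros)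
  have i1: "set_integrable lborel {0..y} (\<lambda>x. 1::real)" by (rule set_integrable_const_Icc)
  have ix: "set_integrable lborel {0..y} (\<lambda>x. s * x)"
    using integral_power_Icc(2)[OF y, of 1] by (intro set_integrable_mult_right) simp
  have ih: "set_integrable lborel {0..y} (\<lambda>x. exp (- s * x) - 1 + s * x)"
    using ie i1 ix by (intro set_integral_add(1) set_integral_diff(1))
  have ip: "set_integrable lborel {0..y} (\<lambda>x. s powr a * x powr a)"
    using powr_int_Icc[of a y] a by (intro set_integrable_mult_right) simp
  have eq: "(LINT x:{0..y}|lborel. exp (- s * x)) = (LINT x:{0..y}|lborel. 1) - (LINT x:{0..y}|lborel. s * x) + (LINT x:{0..y}|lborel. exp (- s * x) - 1 + s * x)"
  proof -
    have "(LINT x:{0..y}|lborel. exp (- s * x) - 1 + s * x) = (LINT x:{0..y}|lborel. exp (- s * x) - 1) + (LINT x:{0..y}|lborel. s * x)"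
      using ie i1 ix by (intro set_integral_add(2) set_integral_diff(1))
    also have "(LINT x:{0..y}|lborel. exp (- s * x) - 1) = (LINT x:{0..y}|lborel. exp (- s * x)) - (LINT x:{0..y}|lborel. 1)"
      using ie i1 by (rule set_integral_diff(2))
    finally show ?thesis by simp
  qed
  have c1: "(LINT x:{0..y}|lborel. 1::real) = y" using y by (simp add: set_integral_const)
  have cx: "(LINT x:{0..y}|lborel. s * x) = s * ((1/2) * y^2)"
    using integral_power_Icc(1)[OF y, of 1] by (simp add: power2_eq_square)
  have ch: "(LINT x:{0..y}|lborel. exp (- s * x) - 1 + s * x) \<le> (LINT x:{0..y}|lborel. s powr a * x powr a)"
  proof (rule set_integral_mono[OF ih ip])
    fix x assume x: "x \<in> {0..y}"
    have "exp (- (s * x)) - 1 + s * x \<le> (s * x) powr a"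
      by (rule h_le_powr) (use x s a in auto)
    then show "exp (- s * x) - 1 + s * x \<le> s powr a * x powr a"
      using x s by (simp add: powr_mult)
  qed
  also have "\<dots> = s powr a * Gp a y" by (simp add: Gp_def)
  finally have "(LINT x:{0..y}|lborel. exp (- s * x) - 1 + s * x) \<le> s powr a * Gp a y" .
  then show ?thesis using eq c1 cx by linarith
qed

lemma kappa_bound:
  assumes L: "prob_on_Rplus L" and s: "0 \<le> s" and a: "1 \<le> a" "a \<le> 2"
    and int1: "integrable L (\<lambda>y. y)" and int2: "integrable L (\<lambda>y. y^2)" and intG: "integrable L (Gp a)"
  shows "(LINT x:{0..r}|lborel. exp (- s * x) * tail L x)
           \<le> (\<integral>y. y \<partial>L) - s * ((1/2) * (\<integral>y. y^2 \<partial>L)) + s powr a * (\<integral>y. Gp a y \<partial>L)"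
proof -
  interpret L: prob_space L using L by (simp add: prob_on_Rplus_def)
  have b: "\<And>x. x \<in> {0..r} \<Longrightarrow> \<bar>exp (- s * x)\<bar> \<le> 1" using s by auto
  have fm: "(\<lambda>x. exp (- s * x)) \<in> borel_measurable borel" by measurable
  note tf = tail_fubini[OF L fm b]
  have iPhi: "integrable L (\<lambda>y. y - s * ((1/2) * y^2) + s powr a * Gp a y)"
    using int1 int2 intG by simp
  have "(LINT x:{0..r}|lborel. exp (- s * x) * tail L x) = (\<integral>y. (LINT x:{0..r}|lborel. exp (- s * x) * indicator {x<..} y) \<partial>L)"
    by (rule tf(1))
  also have "\<dots> \<le> (\<integral>y. y - s * ((1/2) * y^2) + s powr a * Gp a y \<partial>L)"
  proof (rule integral_mono_AE[OF tf(2) iPhi])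
    show "AE y in L. (LINT x:{0..r}|lborel. exp (- s * x) * indicator {x<..} y) \<le> y - s * ((1/2) * y^2) + s powr a * Gp a y"
      using AE_nonneg[OF L]
    proof (rule eventually_mono)
      fix y :: real assume y: "0 \<le> y"
      have "(LINT x:{0..r}|lborel. exp (- s * x) * indicator {x<..} y) \<le> (LINT x:{0..y}|lborel. exp (- s * x))"
        unfolding set_lebesgue_integral_def
      proof (rule integral_mono)
        show "integrable lborel (\<lambda>x. indicator {0..r} x *\<^sub>R (exp (- s * x) * indicator {x<..} y))"
          using set_integrable_mult_bounded[OF set_integrable_bounded_Icc[OF fm b], where g="indicator {..<y}" and B=1]
          by (simp add: set_integrable_def ind_swap)
        show "integrable lborel (\<lambda>x. indicator {0..y} x *\<^sub>R exp (- s * x))"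
          using set_integrable_bounded_Icc[OF fm, of 0 y 1] s by (simp add: set_integrable_def)
      qed (auto simp: indicator_def)
      also have "\<dots> \<le> y - s * ((1/2) * y^2) + s powr a * Gp a y"
        by (rule exp_int_split[OF y s a])
      finally show "(LINT x:{0..r}|lborel. exp (- s * x) * indicator {x<..} y) \<le> y - s * ((1/2) * y^2) + s powr a * Gp a y" .
    qed
  qed
  also have "\<dots> = (\<integral>y. y \<partial>L) - s * ((1/2) * (\<integral>y. y^2 \<partial>L)) + s powr a * (\<integral>y. Gp a y \<partial>L)"
    using int1 int2 intG by simp
  finally show ?thesis .
qed

lemma per_n_bound:
  fixes R :: "real \<Rightarrow> real" and L :: "real measure" and y :: "nat \<Rightarrow> real"
  assumes lam: "0 < lam" and c: "0 \<le> c" and L: "prob_on_Rplus L" and s: "0 \<le> s"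
    and Rsol: "renewal_solution c L R"
    and mass: "\<And>r. 0 \<le> r \<Longrightarrow> c * (LINT x:{0..r}|lborel. exp (- s * x) * tail L x) \<le> 1"
    and h: "0 < h" and ch: "c * h \<le> 1/2"
    and t: "0 \<le> t" and yj: "\<forall>j\<in>{1..k}. 0 \<le> y j"
  shows "exp (- s * t) * Rky lam R t k y \<le> (\<Sum>j=1..k. lam * (3 + 2 * y j / h))"
proof -
  define K where "K x = c * exp (- s * max 0 x) * tail L x" for x
  define u where "u x = exp (- s * x) * R x" for x
  have Rint: "\<And>T. 0 \<le> T \<Longrightarrow> set_integrable lborel {0..T} R"
    and Req: "\<And>t. 0 \<le> t \<Longrightarrow> R t = c * tail L t + c * (LINT s:{0..t}|lborel. R (t - s) * tail L s)"
    using Rsol by (auto simp: renewal_solution_def)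
  note tb = tail_bounds[OF L]
  have Kmeas: "K \<in> borel_measurable borel"
    unfolding K_def using tail_meas[OF L] by measurable
  have RN: "renew K u c"
  proof
    show "K \<in> borel_measurable borel" by (rule Kmeas)
    fix x :: real
    show "0 \<le> K x" unfolding K_def using c tb by simp
    have "exp (- s * max 0 x) \<le> 1" using s by simp
    then have "exp (- s * max 0 x) * tail L x \<le> 1 * 1"
      using tb[of x] by (intro mult_mono) auto
    then show "K x \<le> c" unfolding K_def using c by (simp add: mult.assoc mult_left_le)
  next
    fix T :: real assume T: "0 \<le> T"
    have "set_integrable lborel {0..T} (\<lambda>x. R x * exp (- s * x))"
      by (rule set_integrable_mult_bounded[OF Rint[OF T], where B=1]) (use s in auto)
    then show "set_integrable lborel {0..T} u" unfolding u_def by (simp add: mult.commute)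
  next
    fix t :: real assume t: "0 \<le> t"
    have "(LINT s':{0..t}|lborel. u (t - s') * K s') = (LINT s':{0..t}|lborel. (c * exp (- s * t)) * (R (t - s') * tail L s'))"
    proof (rule set_lebesgue_integral_cong)
      show "\<forall>x. x \<in> {0..t} \<longrightarrow> u (t - x) * K x = (c * exp (- s * t)) * (R (t - x) * tail L x)"
      proof (intro allI impI)
        fix x assume x: "x \<in> {0..t}"
        have "exp (- s * (t - x)) * exp (- s * x) = exp (- s * t)"
          by (simp add: exp_add[symmetric] algebra_simps)
        then show "u (t - x) * K x = (c * exp (- s * t)) * (R (t - x) * tail L x)"
          using x unfolding u_def K_def by (simp add: algebra_simps)
      qed
    qed simp
    also have "\<dots> = c * exp (- s * t) * (LINT s':{0..t}|lborel. R (t - s') * tail L s')"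
      by simp
    finally have e: "(LINT s':{0..t}|lborel. u (t - s') * K s') = c * exp (- s * t) * (LINT s':{0..t}|lborel. R (t - s') * tail L s')" .
    have Kt: "K t = c * exp (- s * t) * tail L t" using t by (simp add: K_def)
    have ut: "u t = exp (- s * t) * (c * tail L t + c * (LINT s:{0..t}|lborel. R (t - s) * tail L s))"
      unfolding u_def by (subst Req[OF t]) (rule refl)
    show "u t = K t + (LINT s':{0..t}|lborel. u (t - s') * K s')"
      unfolding e Kt ut by (simp add: algebra_simps)
  next
    fix r :: real
    show "(LINT x:{0..r}|lborel. K x) \<le> 1"
    proof (cases "r < 0")
      case True then show ?thesis by (simp add: set_lebesgue_integral_def)
    next
      case False
      have "(LINT x:{0..r}|lborel. K x) = (LINT x:{0..r}|lborel. c * (exp (- s * x) * tail L x))"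
        by (rule set_lebesgue_integral_cong) (auto simp: K_def)
      also have "\<dots> = c * (LINT x:{0..r}|lborel. exp (- s * x) * tail L x)" by simp
      also have "\<dots> \<le> 1" using False by (intro mass) simp
      finally show ?thesis .
    qed
  qed
  interpret renew K u c by (rule RN)
  have trm: "exp (- s * t) * (lam * indicator {t<..} (y j) + lam * (LINT s':{0..t}|lborel. R (t - s') * indicator {s'<..} (y j)))
       \<le> lam * (3 + 2 * y j / h)" if j: "j \<in> {1..k}" for j
  proof -
    have y: "0 \<le> y j" using yj j by auto
    have e1: "exp (- s * t) \<le> 1" using s t by simp
    have t1: "exp (- s * t) * (lam * indicator {t<..} (y j)) \<le> lam"
    proof -
      have "exp (- s * t) * indicator {t<..} (y j) \<le> 1 * 1"
        using e1 by (intro mult_mono) (auto simp: indicator_def)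
      then show ?thesis using lam by (simp add: mult.left_commute mult_left_le)
    qed
    have J: "(LINT s':{0..t}|lborel. R (t - s') * indicator {s'<..} (y j)) = (LINT x:{0..t}|lborel. R x * indicator {t - y j<..} x)"
    proof -
      have "(LINT s':{0..t}|lborel. R (t - s') * indicator {s'<..} (y j)) = (LINT s':{0..t}|lborel. (\<lambda>x. R x * indicator {t - y j<..} x) (t - s'))"
        by (rule set_lebesgue_integral_cong) (auto simp: indicator_def)
      also have "\<dots> = (LINT x:{0..t}|lborel. R x * indicator {t - y j<..} x)"
        by (rule reflect_integral)
      finally show ?thesis .
    qed
    have iR: "set_integrable lborel {0..t} (\<lambda>x. R x * indicator {t - y j<..} x)"
      by (rule set_integrable_mult_bounded[OF Rint[OF t], where B=1]) auto
    have iu: "set_integrable lborel {0..t} (\<lambda>x. u x * indicator {t - y j<..} x)"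
      by (rule set_integrable_mult_bounded[OF u_int[OF t], where B=1]) auto
    have "exp (- s * t) * (LINT x:{0..t}|lborel. R x * indicator {t - y j<..} x) = (LINT x:{0..t}|lborel. exp (- s * t) * (R x * indicator {t - y j<..} x))"
      by simp
    also have "\<dots> \<le> (LINT x:{0..t}|lborel. u x * indicator {t - y j<..} x)"
    proof (rule set_integral_mono)
      show "set_integrable lborel {0..t} (\<lambda>x. exp (- s * t) * (R x * indicator {t - y j<..} x))"
        using iR by (rule set_integrable_mult_right)
      show "set_integrable lborel {0..t} (\<lambda>x. u x * indicator {t - y j<..} x)" by (rule iu)
      fix x assume x: "x \<in> {0..t}"
      have ux: "0 \<le> u x" using x by (intro u_nn) auto
      have Rx: "R x = exp (s * x) * u x" unfolding u_def by (simp add: exp_minus_inverse mult.assoc[symmetric] exp_add[symmetric])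
      have R0: "0 \<le> R x" using ux Rx by simp
      have "exp (- s * t) \<le> exp (- s * x)" using x s by (simp add: mult_left_mono)
      then have "exp (- s * t) * R x \<le> exp (- s * x) * R x" using R0 by (rule mult_right_mono)
      then have "exp (- s * t) * R x \<le> u x" unfolding u_def .
      then show "exp (- s * t) * (R x * indicator {t - y j<..} x) \<le> u x * indicator {t - y j<..} x"
        by (auto simp: indicator_def)
    qed
    also have "\<dots> \<le> 2 * (y j / h + 1)" by (rule u_tail_bound[OF t y h ch])
    finally have t2: "exp (- s * t) * (LINT s':{0..t}|lborel. R (t - s') * indicator {s'<..} (y j)) \<le> 2 * (y j / h + 1)"
      unfolding J .
    have "exp (- s * t) * (lam * indicator {t<..} (y j) + lam * (LINT s':{0..t}|lborel. R (t - s') * indicator {s'<..} (y j)))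
        = exp (- s * t) * (lam * indicator {t<..} (y j)) + lam * (exp (- s * t) * (LINT s':{0..t}|lborel. R (t - s') * indicator {s'<..} (y j)))"
      by (simp add: algebra_simps)
    also have "\<dots> \<le> lam + lam * (2 * (y j / h + 1))"
      using t1 t2 lam by (intro add_mono mult_left_mono) auto
    also have "\<dots> = lam * (3 + 2 * y j / h)" by (simp add: algebra_simps)
    finally show ?thesis .
  qed
  have "exp (- s * t) * Rky lam R t k y = (\<Sum>j=1..k. exp (- s * t) * (lam * indicator {t<..} (y j) + lam * (LINT s':{0..t}|lborel. R (t - s') * indicator {s'<..} (y j))))"
    unfolding Rky_def by (simp add: sum_distrib_left)
  also have "\<dots> \<le> (\<Sum>j=1..k. lam * (3 + 2 * y j / h))"
    by (rule sum_mono) (rule trm)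
  finally show ?thesis .
qed

theorem lemma5p5:
  fixes lam :: "nat \<Rightarrow> real" and Lam :: "nat \<Rightarrow> real measure"
    and p q :: "nat \<Rightarrow> nat pmf" and gam :: "nat \<Rightarrow> real"
    and gstar lam0 eta0 sig0 b m alpha beta :: real
    and psi phi :: "real \<Rightarrow> real"
    and R :: "nat \<Rightarrow> real \<Rightarrow> real"
  defines "eta \<equiv> \<lambda>n. integral\<^sup>L (Lam n) (\<lambda>y. y)"
      and "sig \<equiv> \<lambda>n. (1/2) * integral\<^sup>L (Lam n) (\<lambda>y. y^2)"
  \<comment> \<open>standing assumptions\<close>
  assumes lam_pos: "\<And>n. n \<ge> 1 \<Longrightarrow> lam n > 0"
    and Lam_prob: "\<And>n. n \<ge> 1 \<Longrightarrow> prob_on_Rplus (Lam n)"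
    and Lam_mom1: "\<And>n. n \<ge> 1 \<Longrightarrow> integrable (Lam n) (\<lambda>y. y)"
    and Lam_mom2: "\<And>n. n \<ge> 1 \<Longrightarrow> integrable (Lam n) (\<lambda>y. y^2)"
    and p_pos: "\<And>n. n \<ge> 1 \<Longrightarrow> pmf (p n) 0 = 0"
    and q_pos: "\<And>n. n \<ge> 1 \<Longrightarrow> pmf (q n) 0 = 0"
    and p_mean: "\<And>n. n \<ge> 1 \<Longrightarrow> summable (\<lambda>k. real k * pmf (p n) k)"
    and gam_pos: "\<And>n. n \<ge> 1 \<Longrightarrow> gam n > 0"
    and gam_inf: "filterlim gam at_top sequentially"
    and gam_lim: "(\<lambda>n. gam n / real n) \<longlonglongrightarrow> gstar" and gstar_nonneg: "gstar \<ge> 0"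
  \<comment> \<open>Condition 1 (i)\<close>
    and C1_lam: "lam \<longlonglongrightarrow> lam0" "lam0 > 0"
    and C1_eta: "eta \<longlonglongrightarrow> eta0" "eta0 > 0"
    and C1_sig: "sig \<longlonglongrightarrow> sig0" "sig0 > 0"
    and C1_b: "(\<lambda>n. gam n * (1 - lam n * eta n)) \<longlonglongrightarrow> b"
  \<comment> \<open>Condition 1 (ii)\<close>
    and C1_psi: "\<And>K e. K \<ge> 0 \<Longrightarrow> e > 0 \<Longrightarrow>
        eventually (\<lambda>n. \<forall>z\<in>{0..K}. \<bar>psin (gam n) (q n) n z - psi z\<bar> < e) sequentially"
  \<comment> \<open>Condition 1 (iii)\<close>
    and C1_phi_lip: "\<And>K. K \<ge> 0 \<Longrightarrow> \<exists>L. \<forall>n\<ge>1. \<forall>z1\<in>{0..min K (real n)}. \<forall>z2\<in>{0..min K (real n)}.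
        \<bar>phin (gam n) (p n) n z1 - phin (gam n) (p n) n z2\<bar> \<le> L * \<bar>z1 - z2\<bar>"
    and C1_phi_cont: "continuous_on {0..} phi"
    and C1_phi: "\<And>K e. K \<ge> 0 \<Longrightarrow> e > 0 \<Longrightarrow>
        eventually (\<lambda>n. \<forall>z\<in>{0..K}. \<bar>phin (gam n) (p n) n z - phi z\<bar> < e) sequentially"
  \<comment> \<open>m := lim gam_n (1 - m_n), which exists under Condition 1\<close>
    and m_def: "(\<lambda>n. gam n * (1 - pmean (p n))) \<longlonglongrightarrow> m"
  \<comment> \<open>Condition 2 for some alpha in (1,2)\<close>
    and alpha: "1 < alpha" "alpha < 2"
    and C2_1a: "\<exists>C k0. C > 0 \<and> k0 > (0::nat) \<and> (\<forall>n\<ge>1.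
        summable (\<lambda>k. if k \<ge> k0 then (real k / real n) powr alpha * pmf (p n) k else 0) \<and>
        summable (\<lambda>k. real k powr alpha * pmf (q n) k) \<and>
        real n * gam n * (\<Sum>k. if k \<ge> k0 then (real k / real n) powr alpha * pmf (p n) k else 0)
          + (\<Sum>k. real k powr alpha * pmf (q n) k) \<le> C)"
    and C2_1b: "(\<lambda>k1. limsup (\<lambda>n. ereal (gam n *
        (\<Sum>k. if k \<ge> k1 then real k * pmf (p n) k else 0)))) \<longlonglongrightarrow> 0"
    and C2_2: "\<exists>C0 Lstar. C0 > 0 \<and> prob_on_Rplus Lstar \<and>
        integrable Lstar (\<lambda>t. t powr (2 * alpha)) \<and>
        (\<forall>n\<ge>1. \<forall>t\<ge>0. tail (Lam n) t \<le> C0 * tail Lstar t)"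
  \<comment> \<open>beta\<close>
    and beta: "beta \<ge> 0" "beta > - (b + m) / (sig0 * lam0)"
  \<comment> \<open>R^(n) is the (unique) locally integrable solution of the renewal equation\<close>
    and R_sol: "\<And>n. n \<ge> 1 \<Longrightarrow> renewal_solution (lam n * pmean (p n)) (Lam n) (R n)"
  shows "\<exists>C>0. \<exists>n0\<ge>(1::nat). \<forall>k\<ge>1. \<forall>y::nat \<Rightarrow> real. (\<forall>j\<in>{1..k}. y j \<ge> 0) \<longrightarrow>
           (\<forall>n\<ge>n0. \<forall>t\<ge>0. exp (- beta * t / gam n) * Rky (lam n) (R n) t k y
                        \<le> C * (\<Sum>j=1..k. 1 + y j))"
proof -
  have eta_eq: "\<And>n. eta n = (\<integral>y. y \<partial>Lam n)" unfolding eta_def by simp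
  have sig_eq: "\<And>n. sig n = (1/2) * (\<integral>y. y^2 \<partial>Lam n)" unfolding sig_def by simp
  obtain C0 Lstar where C0: "C0 > 0" and Lstar: "prob_on_Rplus Lstar"
    and intS: "integrable Lstar (\<lambda>t. t powr (2 * alpha))"
    and dom: "\<And>n t. n \<ge> 1 \<Longrightarrow> t \<ge> 0 \<Longrightarrow> tail (Lam n) t \<le> C0 * tail Lstar t"
    using C2_2 by blast
  define B where "B = C0 * (\<integral>y. 1 + y powr (2 * alpha) \<partial>Lstar)"
  have a1: "1 \<le> alpha" using alpha by simp
  have Mb: "integrable (Lam n) (Gp alpha)" "(\<integral>y. Gp alpha y \<partial>Lam n) \<le> B" if n: "n \<ge> 1" for n
    using moment_bound[OF Lam_prob[OF n] Lstar a1 less_imp_le[OF C0] dom[OF n] intS] unfolding B_def by auto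
  define c where "c n = lam n * pmean (p n)" for n
  define s where "s n = beta / gam n" for n
  have pm_nn: "0 \<le> pmean (p n)" if "n \<ge> 1" for n
    unfolding pmean_def using p_mean[OF that] by (intro suminf_nonneg) auto
  have c_nn: "0 \<le> c n" if "n \<ge> 1" for n
    unfolding c_def using lam_pos[OF that] pm_nn[OF that] by simp
  have s_nn: "0 \<le> s n" if "n \<ge> 1" for n
    unfolding s_def using beta(1) gam_pos[OF that] by simp
  have ev1: "eventually (\<lambda>n. n \<ge> (1::nat)) sequentially" by (rule eventually_ge_at_top)
  have evg: "eventually (\<lambda>n. gam n > 0) sequentially"
    using ev1 by (rule eventually_mono) (rule gam_pos)
  have ginv: "(\<lambda>n. inverse (gam n)) \<longlonglongrightarrow> 0" by (rule tendsto_inverse_0_at_top[OF gam_inf])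
  have pm1: "(\<lambda>n. pmean (p n)) \<longlonglongrightarrow> 1"
  proof -
    have "(\<lambda>n. 1 - gam n * (1 - pmean (p n)) * inverse (gam n)) \<longlonglongrightarrow> 1 - m * 0"
      by (intro tendsto_intros m_def ginv)
    then have l: "(\<lambda>n. 1 - gam n * (1 - pmean (p n)) * inverse (gam n)) \<longlonglongrightarrow> 1" by simp
    show ?thesis
      by (rule Lim_transform_eventually[OF l]) (use evg in \<open>auto elim!: eventually_mono simp: field_simps\<close>)
  qed
  have le1: "(\<lambda>n. lam n * eta n) \<longlonglongrightarrow> 1"
  proof -
    have "(\<lambda>n. 1 - gam n * (1 - lam n * eta n) * inverse (gam n)) \<longlonglongrightarrow> 1 - b * 0"
      by (intro tendsto_intros C1_b ginv)
    then have l: "(\<lambda>n. 1 - gam n * (1 - lam n * eta n) * inverse (gam n)) \<longlonglongrightarrow> 1" by simp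
    show ?thesis
      by (rule Lim_transform_eventually[OF l]) (use evg in \<open>auto elim!: eventually_mono simp: field_simps\<close>)
  qed
  have cl: "c \<longlonglongrightarrow> lam0"
    using tendsto_mult[OF C1_lam(1) pm1] unfolding c_def by simp
  have gp: "(\<lambda>n. gam n powr (1 - alpha)) \<longlonglongrightarrow> 0"
    by (rule tendsto_neg_powr[OF _ gam_inf]) (use alpha in simp)
  define Rn where "Rn n = gam n * (1 - lam n * eta n) + lam n * eta n * (gam n * (1 - pmean (p n)))
      + c n * beta * sig n - c n * (beta powr alpha * gam n powr (1 - alpha)) * B" for n
  have Rlim: "Rn \<longlonglongrightarrow> b + 1 * m + lam0 * beta * sig0 - lam0 * (beta powr alpha * 0) * B"
    unfolding Rn_def by (intro tendsto_intros C1_b le1 m_def cl C1_sig(1) gp)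
  have pos: "0 < b + m + lam0 * beta * sig0"
  proof -
    have "- (b + m) / (sig0 * lam0) < beta" using beta(2) .
    then have "- (b + m) < beta * (sig0 * lam0)"
      using C1_sig(2) C1_lam(2) by (simp add: divide_less_eq)
    then show ?thesis by (simp add: algebra_simps)
  qed
  have evR: "eventually (\<lambda>n. 0 < Rn n) sequentially"
    using Rlim pos by (intro order_tendstoD(1)) auto
  have evlam: "eventually (\<lambda>n. lam n < 2 * lam0) sequentially"
    using C1_lam by (intro order_tendstoD(2)) auto
  have evc: "eventually (\<lambda>n. c n < 2 * lam0) sequentially"
    using cl C1_lam(2) by (intro order_tendstoD(2)) auto
  have "eventually (\<lambda>n. n \<ge> 1 \<and> 0 < Rn n \<and> lam n < 2 * lam0 \<and> c n < 2 * lam0) sequentially"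
    using eventually_conj[OF ev1 eventually_conj[OF evR eventually_conj[OF evlam evc]]] by simp
  then obtain N where N: "\<And>n. n \<ge> N \<Longrightarrow> n \<ge> 1 \<and> 0 < Rn n \<and> lam n < 2 * lam0 \<and> c n < 2 * lam0"
    by (auto simp: eventually_sequentially)
  define n0 where "n0 = max N 1"
  define h where "h = 1 / (4 * lam0)"
  define C where "C = 2 * lam0 * max 3 (2 / h)"
  have h: "0 < h" unfolding h_def using C1_lam(2) by simp
  have Cpos: "0 < C" unfolding C_def using C1_lam(2) by simp
  have key: "exp (- beta * t / gam n) * Rky (lam n) (R n) t k y \<le> C * (\<Sum>j=1..k. 1 + y j)"
    if n: "n \<ge> n0" and t: "0 \<le> t" and yj: "\<forall>j\<in>{1..k}. 0 \<le> y j" for n t k y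
  proof -
    have Nn: "n \<ge> 1" "0 < Rn n" "lam n < 2 * lam0" "c n < 2 * lam0" using N[of n] n unfolding n0_def by auto
    have gpos: "0 < gam n" using gam_pos[OF Nn(1)] .
    have ch: "c n * h \<le> 1/2"
    proof -
      have "c n * h \<le> 2 * lam0 * h" using Nn(4) h by (intro mult_right_mono) auto
      also have "\<dots> = 1/2" unfolding h_def using C1_lam(2) by simp
      finally show ?thesis .
    qed
    have sp: "gam n * s n powr alpha = beta powr alpha * gam n powr (1 - alpha)"
    proof -
      have "s n powr alpha = beta powr alpha / gam n powr alpha"
        unfolding s_def using beta(1) gpos by (simp add: powr_divide)
      moreover have "gam n powr (1 - alpha) = gam n / gam n powr alpha"
        using gpos by (simp add: powr_diff)
      ultimately show ?thesis by simp
    qed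
    have gs: "gam n * s n = beta" unfolding s_def using gpos by simp
    have Qeq: "gam n * (1 - c n * (eta n - s n * sig n + s n powr alpha * B)) = Rn n"
    proof -
      have "gam n * (1 - c n * (eta n - s n * sig n + s n powr alpha * B))
          = gam n * (1 - lam n * eta n) + lam n * eta n * (gam n * (1 - pmean (p n)))
            + c n * (gam n * s n) * sig n - c n * (gam n * s n powr alpha) * B"
        unfolding c_def by (simp add: algebra_simps)
      then show ?thesis unfolding Rn_def gs sp by simp
    qed
    have lt1: "c n * (eta n - s n * sig n + s n powr alpha * B) < 1"
    proof -
      have "0 < gam n * (1 - c n * (eta n - s n * sig n + s n powr alpha * B))" using Qeq Nn(2) by simp
      then show ?thesis using gpos by (simp add: zero_less_mult_iff)
    qed
    have mass: "c n * (LINT x:{0..r}|lborel. exp (- s n * x) * tail (Lam n) x) \<le> 1" if "0 \<le> r" for r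
    proof -
      have "(LINT x:{0..r}|lborel. exp (- s n * x) * tail (Lam n) x)
          \<le> (\<integral>y. y \<partial>Lam n) - s n * ((1/2) * (\<integral>y. y^2 \<partial>Lam n)) + s n powr alpha * (\<integral>y. Gp alpha y \<partial>Lam n)"
        by (rule kappa_bound[OF Lam_prob[OF Nn(1)] s_nn[OF Nn(1)] a1 less_imp_le[OF alpha(2)]
              Lam_mom1[OF Nn(1)] Lam_mom2[OF Nn(1)] Mb(1)[OF Nn(1)]])
      also have "\<dots> \<le> eta n - s n * sig n + s n powr alpha * B"
        using Mb(2)[OF Nn(1)] unfolding eta_eq sig_eq by (simp add: mult_left_mono)
      finally have "c n * (LINT x:{0..r}|lborel. exp (- s n * x) * tail (Lam n) x) \<le> c n * (eta n - s n * sig n + s n powr alpha * B)"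
        using c_nn[OF Nn(1)] by (intro mult_left_mono)
      then show ?thesis using lt1 by simp
    qed
    have Rs: "renewal_solution (c n) (Lam n) (R n)" using R_sol[OF Nn(1)] unfolding c_def .
    have "exp (- s n * t) * Rky (lam n) (R n) t k y \<le> (\<Sum>j=1..k. lam n * (3 + 2 * y j / h))"
      by (rule per_n_bound[OF lam_pos[OF Nn(1)] c_nn[OF Nn(1)] Lam_prob[OF Nn(1)] s_nn[OF Nn(1)] Rs mass h ch t yj])
    also have "\<dots> \<le> (\<Sum>j=1..k. C * (1 + y j))"
    proof (rule sum_mono)
      fix j assume j: "j \<in> {1..k}"
      have y: "0 \<le> y j" using yj j by auto
      have "lam n * (3 + 2 * y j / h) \<le> 2 * lam0 * (3 + 2 / h * y j)"
        using Nn(3) lam_pos[OF Nn(1)] y h by (intro mult_mono) auto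
      also have "\<dots> \<le> 2 * lam0 * (max 3 (2 / h) + max 3 (2 / h) * y j)"
        using C1_lam(2) y by (intro mult_left_mono add_mono mult_right_mono) auto
      also have "\<dots> = C * (1 + y j)" unfolding C_def by (simp add: algebra_simps)
      finally show "lam n * (3 + 2 * y j / h) \<le> C * (1 + y j)" .
    qed
    also have "\<dots> = C * (\<Sum>j=1..k. 1 + y j)" by (simp add: sum_distrib_left)
    finally show ?thesis unfolding s_def by (simp add: mult.commute)
  qed
  show ?thesis
  proof (intro exI[of _ C] conjI exI[of _ n0] allI impI)
    show "0 < C" by (rule Cpos)
    show "1 \<le> n0" unfolding n0_def by simp
  qed (use key in auto)
qed

end
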